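(* Let $x>0$, $y>0$, and let $p=p_n=\lfloor x n^{1/2}\rfloor$ and $q=q_n=\lfloor y n^{1/2}\rfloor$. Set $$K_n=\left(\frac{2}{n}\right)^{pq/2}\prod_{j=1}^{q}\frac{\Gamma((n-j+1)/2)}{\Gamma((n-p-j+1)/2)}.$$ Then, as $n\to\infty$, $$K_n=\exp\left\{-\left(\frac{p^2q+pq^2}{4n}+\frac{xy}{4}+\frac{2x^3y+2xy^3+3x^2y^2}{24}\right)+o(1)\right\}.$$
   Context: $\Gamma$ denotes the Gamma function and $\lfloor a\rfloor$ the integer part of $a$. *)

theory Defs
  imports "HOL-Analysis.Analysis"
begin

definition pn :: "real \<Rightarrow> nat \<Rightarrow> nat" where
  "pn x n = nat \<lfloor>x * sqrt (real n)\<rfloor>"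

definition Kn :: "real \<Rightarrow> real \<Rightarrow> nat \<Rightarrow> real" where
  "Kn x y n = (let p = pn x n; q = pn y n in
     (2 / real n) powr (real p * real q / 2) *
     (\<Prod>j=1..q. Gamma ((real n - real j + 1) / 2) / Gamma ((real n - real p - real j + 1) / 2)))"

end

theory Submission imports Defs "HOL-Real_Asymp.Real_Asymp" begin

definition rho :: "real \<Rightarrow> real" where
  "rho a = Gamma (a + 1/2) / (Gamma a * sqrt a)"

lemma gamma_ratio:
  fixes a c :: real and k r :: nat
  assumes a: "a > 0" and c: "c > 0" and r: "r < 2"
  shows "c powr ((2*real k + real r)/2) * (Gamma (a + (2*real k + real r)/2) / Gamma a)
     = (\<Prod>i<k. c * (a + real r/2 + real i)) * (if r = 1 then sqrt (c*a) * rho a else 1)"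
proof -
  have b: "a + real r / 2 > 0" using a by simp
  have nz: "a + real r / 2 \<notin> \<int>\<^sub>\<le>\<^sub>0" using b by (auto elim!: nonpos_Ints_cases)
  have G: "Gamma (a + (2*real k + real r)/2) = pochhammer (a + real r/2) k * Gamma (a + real r/2)"
  proof -
    have gp: "Gamma (a + real r/2) > 0" using b by simp
    have eq: "a + real r/2 + real k = a + (2*real k + real r)/2" by (simp add: field_simps)
    from pochhammer_Gamma[OF nz, of k] gp have "Gamma (a + real r/2 + real k) = pochhammer (a + real r/2) k * Gamma (a + real r/2)"
      by (simp add: field_simps)
    then show ?thesis by (metis eq)
  qed
  have P: "(\<Prod>i<k. c * (a + real r/2 + real i)) = c^k * pochhammer (a + real r/2) k"
    by (simp add: pochhammer_prod prod.distrib atLeast0LessThan)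
  have pw: "c powr ((2*real k + real r)/2) = c^k * c powr (real r / 2)"
    using c by (simp add: add_divide_distrib powr_add powr_realpow)
  show ?thesis
  proof (cases "r = 1")
    case True
    have "c powr (real r / 2) = sqrt c" using True c by (simp add: powr_half_sqrt)
    then show ?thesis using True G P pw a c
      by (simp add: rho_def real_sqrt_mult field_simps)
  next
    case False
    then have "r = 0" using r by simp
    moreover have "Gamma a \<noteq> 0" using Gamma_real_pos[OF a] by simp
    ultimately show ?thesis using G P pw a c by simp
  qed
qed

lemma Gamma_plus1_real: "(z::real) > 0 \<Longrightarrow> Gamma (z + 1) = z * Gamma z"
  by (rule Gamma_plus1) (auto elim!: nonpos_Ints_cases)

lemma lnGamma_mid:
  fixes u v :: real assumes "u > 0" "v > 0"
  shows "ln (Gamma ((u + v)/2)) \<le> (ln (Gamma u) + ln (Gamma v)) / 2"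
proof -
  have "(ln \<circ> Gamma) ((1 - 1/2) *\<^sub>R u + (1/2) *\<^sub>R v) \<le> (1 - 1/2) * (ln \<circ> Gamma) u + (1/2) * (ln \<circ> Gamma) v"
    by (rule convex_onD[OF log_convex_Gamma_real]) (use assms in auto)
  then show ?thesis by (simp add: field_simps)
qed

lemma rho_bound:
  fixes a :: real assumes a: "a > 0"
  shows "rho a > 0" "\<bar>ln (rho a)\<bar> \<le> 1 / (4 * a)"
proof -
  have g0: "Gamma a > 0" using a by simp
  have g1: "Gamma (a + 1/2) > 0" using a by simp
  have g2: "Gamma (a + 1) = a * Gamma a" using Gamma_plus1_real[OF a] .
  have g3: "Gamma (a + 3/2) = (a + 1/2) * Gamma (a + 1/2)"
    using Gamma_plus1_real[of "a + 1/2"] a by (simp add: add.assoc)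
  show pos: "rho a > 0" unfolding rho_def using g0 g1 a by simp
  have lr: "ln (rho a) = ln (Gamma (a + 1/2)) - ln (Gamma a) - ln a / 2"
  proof -
    have "ln (Gamma (a + 1/2) / (Gamma a * sqrt a)) = ln (Gamma (a + 1/2)) - ln (Gamma a * sqrt a)"
      by (rule ln_divide_pos) (use g0 g1 a in auto)
    also have "ln (Gamma a * sqrt a) = ln (Gamma a) + ln (sqrt a)" by (rule ln_mult_pos) (use g0 a in auto)
    also have "ln (sqrt a) = ln a / 2" using a by (simp add: ln_sqrt)
    finally show ?thesis unfolding rho_def by simp
  qed
  have c1: "ln (Gamma (a + 1/2)) \<le> (ln (Gamma a) + ln (Gamma (a+1))) / 2"
  proof -
    have e: "(a + (a+1))/2 = a + 1/2" by simp
    have "a + 1 > 0" using a by auto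
    from lnGamma_mid[OF a this] show ?thesis unfolding e .
  qed
  have c2: "ln (Gamma (a + 1)) \<le> (ln (Gamma (a + 1/2)) + ln (Gamma (a+3/2))) / 2"
  proof -
    have e: "(a + 1/2 + (a+3/2))/2 = a + 1" by simp
    have "a + 1/2 > 0" "a + 3/2 > 0" using a by auto
    from lnGamma_mid[OF this] show ?thesis unfolding e .
  qed
  have l2: "ln (Gamma (a + 1)) = ln a + ln (Gamma a)" using g2 g0 a by (simp add: ln_mult_pos)
  have l3: "ln (Gamma (a + 3/2)) = ln (a + 1/2) + ln (Gamma (a + 1/2))" using g3 g1 a by (simp add: ln_mult_pos)
  have up: "ln (rho a) \<le> 0" using lr c1 l2 by simp
  have "ln (a + 1/2) - ln a = ln (1 + 1/(2*a))"
  proof -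
    have "1 + 1/(2*a) = (a + 1/2) / a" using a by (simp add: field_simps)
    then show ?thesis using a by (simp add: ln_divide_pos)
  qed
  also have "\<dots> \<le> 1/(2*a)" using a by (intro ln_add_one_self_le_self) simp
  finally have "ln (a + 1/2) - ln a \<le> 1/(2*a)" .
  then have lo: "ln (rho a) \<ge> - (1/(4*a))" using lr c2 l2 l3 by simp
  show "\<bar>ln (rho a)\<bar> \<le> 1 / (4 * a)" using up lo by simp
qed

lemma ln_taylor2:
  fixes t :: real assumes t: "0 \<le> t" "t \<le> 1/2"
  shows "\<bar>ln (1 - t) + t + t^2/2\<bar> \<le> t^3"
proof -
  define g where "g s = ln (1 - s) + s + s^2/2 + s^3" for s :: real
  define h where "h s = ln (1 - s) + s + s^2/2" for s :: real
  have dg: "(g has_real_derivative (- 1/(1-s) + 1 + s + 3 * s^2)) (at s)" if "s < 1" for s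
    unfolding g_def using that by (auto intro!: derivative_eq_intros simp: field_simps power2_eq_square)
  have dh: "(h has_real_derivative (- 1/(1-s) + 1 + s)) (at s)" if "s < 1" for s
    unfolding h_def using that by (auto intro!: derivative_eq_intros simp: field_simps power2_eq_square)
  have "g 0 \<le> g t"
  proof (rule DERIV_nonneg_imp_nondecreasing[OF t(1)])
    fix s assume s: "0 \<le> s" "s \<le> t"
    have "- 1/(1-s) + 1 + s + 3 * s^2 = s^2 * (2 - 3 * s) / (1 - s)"
      using s t by (simp add: field_simps power2_eq_square power3_eq_cube)
    also have "\<dots> \<ge> 0" using s t by (intro divide_nonneg_pos mult_nonneg_nonneg) auto
    finally show "\<exists>y. DERIV g s :> y \<and> y \<ge> 0" using dg[of s] s t by auto
  qed
  moreover have "h t \<le> h 0"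
  proof (rule DERIV_nonpos_imp_nonincreasing[OF t(1)])
    fix s assume s: "0 \<le> s" "s \<le> t"
    have "- 1/(1-s) + 1 + s = - (s^2 / (1 - s))"
      using s t by (simp add: field_simps power2_eq_square)
    also have "\<dots> \<le> 0" using s t by simp
    finally show "\<exists>y. DERIV h s :> y \<and> y \<le> 0" using dh[of s] s t by auto
  qed
  ultimately show ?thesis using t unfolding g_def h_def by (simp add: abs_le_iff)
qed

lemma ln_taylor1:
  fixes t :: real assumes t: "0 \<le> t" "t \<le> 1/2"
  shows "\<bar>ln (1 - t) + t\<bar> \<le> 2 * t^2"
  using ln_one_minus_pos_lower_bound[OF t] ln_one_minus_pos_upper_bound[of t] t
  by (simp add: abs_le_iff)

lemma K_prod:
  fixes n p q :: nat
  assumes n: "n > 0" and pq: "p + q < n"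
  shows "(2 / real n) powr (real p * real q / 2) *
     (\<Prod>j=1..q. Gamma ((real n - real j + 1) / 2) / Gamma ((real n - real p - real j + 1) / 2))
   = (\<Prod>j=1..q. (\<Prod>i<p div 2. 1 - (2 * real i + real j + 1) / real n) *
        (if p mod 2 = 1 then sqrt (1 - (real p + real j - 1) / real n) * rho ((real n - real p - real j + 1) / 2) else 1))"
proof -
  define c where "c = 2 / real n"
  define k where "k = p div 2"
  define r where "r = p mod 2"
  have c: "c > 0" using n by (simp add: c_def)
  have pk: "real p = 2 * real k + real r" unfolding k_def r_def
    by (metis of_nat_add of_nat_mult of_nat_numeral div_mult_mod_eq mult.commute)
  have r2: "r < 2" by (simp add: r_def)
  have "(c powr (real p / 2)) ^ q = (c powr (real p / 2)) powr (real q)"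
    by (rule powr_realpow[symmetric]) (use c in simp)
  also have "\<dots> = c powr (real p * real q / 2)" by (simp add: powr_powr)
  finally have "c powr (real p * real q / 2) = (c powr (real p / 2)) ^ q" ..
  also have "\<dots> = (\<Prod>j=1..q. c powr (real p / 2))" by simp
  finally have pw: "c powr (real p * real q / 2) = (\<Prod>j=1..q. c powr (real p / 2))" .
  have step: "c powr (real p / 2) * (Gamma ((real n - real j + 1) / 2) / Gamma ((real n - real p - real j + 1) / 2))
     = (\<Prod>i<p div 2. 1 - (2 * real i + real j + 1) / real n) *
        (if p mod 2 = 1 then sqrt (1 - (real p + real j - 1) / real n) * rho ((real n - real p - real j + 1) / 2) else 1)"
    if j: "j \<in> {1..q}" for j
  proof -
    define a where "a = (real n - real p - real j + 1) / 2"
    have a: "a > 0" using j pq unfolding a_def by auto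
    have A: "(real n - real j + 1) / 2 = a + (2 * real k + real r) / 2" unfolding a_def using pk by (simp add: field_simps)
    have "c powr (real p / 2) * (Gamma ((real n - real j + 1) / 2) / Gamma ((real n - real p - real j + 1) / 2))
       = c powr ((2*real k + real r)/2) * (Gamma (a + (2*real k + real r)/2) / Gamma a)"
      unfolding A[symmetric] by (simp only: a_def pk)
    also have "\<dots> = (\<Prod>i<k. c * (a + real r/2 + real i)) * (if r = 1 then sqrt (c*a) * rho a else 1)"
      by (rule gamma_ratio[OF a c r2])
    also have "(\<Prod>i<k. c * (a + real r/2 + real i)) = (\<Prod>i<k. (\<lambda>i. 1 - (2 * real i + real j + 1) / real n) (k - Suc i))"
    proof (rule prod.cong[OF refl])
      fix i assume "i \<in> {..<k}"
      then have "real (k - Suc i) = real k - 1 - real i" by auto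
      then show "c * (a + real r/2 + real i) = (\<lambda>i. 1 - (2 * real i + real j + 1) / real n) (k - Suc i)"
        using n pk unfolding c_def a_def by (simp add: field_simps)
    qed
    also have "\<dots> = (\<Prod>i<k. 1 - (2 * real i + real j + 1) / real n)"
      by (rule prod.nat_diff_reindex)
    also have "c * a = 1 - (real p + real j - 1) / real n"
      using n unfolding c_def a_def by (simp add: field_simps)
    finally show ?thesis unfolding k_def r_def a_def by simp
  qed
  have "c powr (real p * real q / 2) *
     (\<Prod>j=1..q. Gamma ((real n - real j + 1) / 2) / Gamma ((real n - real p - real j + 1) / 2))
    = (\<Prod>j=1..q. c powr (real p / 2) * (Gamma ((real n - real j + 1) / 2) / Gamma ((real n - real p - real j + 1) / 2)))"
    unfolding pw prod.distrib ..
  also have "\<dots> = (\<Prod>j=1..q. (\<Prod>i<p div 2. 1 - (2 * real i + real j + 1) / real n) *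
        (if p mod 2 = 1 then sqrt (1 - (real p + real j - 1) / real n) * rho ((real n - real p - real j + 1) / 2) else 1))"
    by (rule prod.cong[OF refl step])
  finally show ?thesis unfolding c_def .
qed

lemma sumT_inner: "(\<Sum>i<k. 2 * real i + d + 1) = real k * (real k - 1) + real k * (d + 1)"
proof (induction k)
  case (Suc k)
  have "(\<Sum>i<Suc k. 2 * real i + d + 1) = (\<Sum>i<k. 2 * real i + d + 1) + (2 * real k + d + 1)" by simp
  also have "\<dots> = real k * (real k - 1) + real k * (d + 1) + (2 * real k + d + 1)" by (simp only: Suc.IH)
  also have "\<dots> = real (Suc k) * (real (Suc k) - 1) + real (Suc k) * (d + 1)" by (simp add: algebra_simps)
  finally show ?case .
qed simp

lemma sumT: "(\<Sum>j=1..q. \<Sum>i<k. 2 * real i + real j + 1) = real k * real q * (2 * real k + real q + 1) / 2"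
proof (induction q)
  case (Suc q)
  have "(\<Sum>j=1..Suc q. \<Sum>i<k. 2 * real i + real j + 1) = (\<Sum>j=1..q. \<Sum>i<k. 2 * real i + real j + 1) + (\<Sum>i<k. 2 * real i + real (Suc q) + 1)" by simp
  also have "\<dots> = real k * real q * (2 * real k + real q + 1) / 2 + (real k * (real k - 1) + real k * (real (Suc q) + 1))"
    by (subst Suc.IH, subst sumT_inner, rule refl)
  also have "\<dots> = real k * real (Suc q) * (2 * real k + real (Suc q) + 1) / 2" by (simp add: field_simps)
  finally show ?case .
qed simp

lemma sumT2_inner: "(\<Sum>i<k. (2 * real i + d + 1)^2) = 4 * (real k - 1) * real k * (2 * real k - 1) / 6 + 2 * (d + 1) * real k * (real k - 1) + real k * (d + 1)^2"
proof (induction k)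
  case (Suc k)
  have "(\<Sum>i<Suc k. (2 * real i + d + 1)^2) = (\<Sum>i<k. (2 * real i + d + 1)^2) + (2 * real k + d + 1)^2" by simp
  also have "\<dots> = 4 * (real k - 1) * real k * (2 * real k - 1) / 6 + 2 * (d + 1) * real k * (real k - 1) + real k * (d + 1)^2 + (2 * real k + d + 1)^2" by (simp only: Suc.IH)
  also have "\<dots> = 4 * (real (Suc k) - 1) * real (Suc k) * (2 * real (Suc k) - 1) / 6 + 2 * (d + 1) * real (Suc k) * (real (Suc k) - 1) + real (Suc k) * (d + 1)^2" by (simp add: field_simps power2_eq_square)
  finally show ?case .
qed simp

definition F2 :: "real \<Rightarrow> real \<Rightarrow> real" where
  "F2 k q = 4 * q * (k - 1) * k * (2 * k - 1) / 6 + k * (k - 1) * q * (q + 3) + k * ((q + 1) * (q + 2) * (2 * q + 3) / 6 - 1)"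

lemma sumT2: "(\<Sum>j=1..q. \<Sum>i<k. (2 * real i + real j + 1)^2) = F2 (real k) (real q)"
proof (induction q)
  case (Suc q)
  have "(\<Sum>j=1..Suc q. \<Sum>i<k. (2 * real i + real j + 1)^2) = (\<Sum>j=1..q. \<Sum>i<k. (2 * real i + real j + 1)^2) + (\<Sum>i<k. (2 * real i + real (Suc q) + 1)^2)" by simp
  also have "\<dots> = F2 (real k) (real q) + (4 * (real k - 1) * real k * (2 * real k - 1) / 6 + 2 * (real (Suc q) + 1) * real k * (real k - 1) + real k * (real (Suc q) + 1)^2)"
    by (subst Suc.IH, subst sumT2_inner, rule refl)
  also have "\<dots> = F2 (real k) (real (Suc q))" unfolding F2_def by (simp add: field_simps power2_eq_square)
  finally show ?case .
qed (simp add: F2_def)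

lemma sumS: "(\<Sum>j=1..q. real p + real j - 1) = real q * (2 * real p + real q - 1) / 2"
proof (induction q)
  case (Suc q)
  have "(\<Sum>j=1..Suc q. real p + real j - 1) = (\<Sum>j=1..q. real p + real j - 1) + (real p + real (Suc q) - 1)" by simp
  also have "\<dots> = real q * (2 * real p + real q - 1) / 2 + (real p + real (Suc q) - 1)" by (subst Suc.IH, rule refl)
  also have "\<dots> = real (Suc q) * (2 * real p + real (Suc q) - 1) / 2" by (simp add: field_simps)
  finally show ?case .
qed simp

lemma factor_j:
  fixes n p q j :: nat
  assumes n: "n > 0" and small: "real p + real q + 1 \<le> real n / 2" and j: "j \<in> {1..q}"
  defines "r \<equiv> real (p mod 2)" and "Tm \<equiv> (real p + real q + 1) / real n"
  shows "\<exists>E. \<bar>E\<bar> \<le> real p * Tm^3 + (Tm^2 + 1 / real n) \<and>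
    (\<Prod>i<p div 2. 1 - (2 * real i + real j + 1) / real n) *
        (if p mod 2 = 1 then sqrt (1 - (real p + real j - 1) / real n) * rho ((real n - real p - real j + 1) / 2) else 1) > 0 \<and>
    ln ((\<Prod>i<p div 2. 1 - (2 * real i + real j + 1) / real n) *
        (if p mod 2 = 1 then sqrt (1 - (real p + real j - 1) / real n) * rho ((real n - real p - real j + 1) / 2) else 1))
    = E - (\<Sum>i<p div 2. 2 * real i + real j + 1) / real n - (\<Sum>i<p div 2. (2 * real i + real j + 1)^2) / (2 * (real n)^2)
        - r * (real p + real j - 1) / (2 * real n)"
proof -
  define k where "k = p div 2"
  define T where "T i = (2 * real i + real j + 1) / real n" for i :: nat
  define S where "S = (real p + real j - 1) / real n"
  define \<alpha> where "\<alpha> = (real n - real p - real j + 1) / 2"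
  define H where "H = (if p mod 2 = 1 then sqrt (1 - S) * rho \<alpha> else 1)"
  have nr: "real n > 0" using n by simp
  have Tm: "Tm \<le> 1/2" using small nr unfolding Tm_def by (simp add: field_simps)
  have k2: "2 * k \<le> p" unfolding k_def by simp
  have T: "0 \<le> T i \<and> T i \<le> Tm" if "i < k" for i
  proof -
    have "2 * real i + 2 \<le> real p" using that k2 by linarith
    then have "2 * real i + real j + 1 \<le> real p + real q + 1" using j by auto
    then show ?thesis unfolding T_def Tm_def using nr by (simp add: divide_right_mono)
  qed
  have S: "0 \<le> S \<and> S \<le> Tm" unfolding S_def Tm_def using j nr by (auto simp: divide_right_mono)
  have \<alpha>: "\<alpha> \<ge> real n / 4" unfolding \<alpha>_def using small j by auto
  have \<alpha>0: "\<alpha> > 0" using \<alpha> nr by linarith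
  have r01: "r = 0 \<or> r = 1" unfolding r_def by auto
  have rho: "rho \<alpha> > 0" "\<bar>ln (rho \<alpha>)\<bar> \<le> 1 / (4 * \<alpha>)" using rho_bound[OF \<alpha>0] by auto
  have rhob: "1 / (4 * \<alpha>) \<le> 1 / real n" using \<alpha> nr by (simp add: field_simps)
  have Tpos: "1 - T i > 0" if "i < k" for i using T[OF that] Tm by linarith
  have Spos: "1 - S > 0" using S Tm by linarith
  have Hpos: "H > 0" unfolding H_def using Spos rho by auto
  have lnH: "ln H = r * (ln (1 - S) / 2 + ln (rho \<alpha>))"
  proof (cases "p mod 2 = 1")
    case True
    then have "ln H = ln (sqrt (1 - S)) + ln (rho \<alpha>)" unfolding H_def using Spos rho by (simp add: ln_mult_pos)
    then show ?thesis using True Spos unfolding r_def by (simp add: ln_sqrt)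
  next
    case False
    then have "p mod 2 = 0" by auto
    then show ?thesis using False unfolding H_def r_def by simp
  qed
  have P: "(\<Prod>i<k. 1 - T i) > 0" using Tpos by (intro prod_pos) auto
  have lnP: "ln (\<Prod>i<k. 1 - T i) = (\<Sum>i<k. ln (1 - T i))"
    by (rule ln_prod) (use Tpos in force)+
  define E1 where "E1 = (\<Sum>i<k. ln (1 - T i) + T i + (T i)^2 / 2)"
  define E2 where "E2 = r * ((ln (1 - S) + S) / 2 + ln (rho \<alpha>))"
  have E1b: "\<bar>E1\<bar> \<le> real p * Tm^3"
  proof -
    have "\<bar>E1\<bar> \<le> (\<Sum>i<k. \<bar>ln (1 - T i) + T i + (T i)^2 / 2\<bar>)" unfolding E1_def by (rule sum_abs)
    also have "\<dots> \<le> (\<Sum>i<k. Tm^3)"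
    proof (rule sum_mono)
      fix i assume "i \<in> {..<k}"
      then have "0 \<le> T i" "T i \<le> Tm" using T by auto
      then have "\<bar>ln (1 - T i) + T i + (T i)^2 / 2\<bar> \<le> (T i)^3" using Tm by (intro ln_taylor2) auto
      also have "\<dots> \<le> Tm^3" using \<open>0 \<le> T i\<close> \<open>T i \<le> Tm\<close> by (intro power_mono) auto
      finally show "\<bar>ln (1 - T i) + T i + (T i)^2 / 2\<bar> \<le> Tm^3" .
    qed
    also have "\<dots> = real k * Tm^3" by simp
    also have "\<dots> \<le> real p * Tm^3" using k2 Tm_def nr by (intro mult_right_mono) (auto simp: Tm_def)
    finally show ?thesis .
  qed
  have E2b: "\<bar>E2\<bar> \<le> Tm^2 + 1 / real n"
  proof -
    have a1: "\<bar>ln (1 - S) + S\<bar> \<le> 2 * S^2" using S Tm by (intro ln_taylor1) auto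
    have a2: "S^2 \<le> Tm^2" using S by (intro power_mono) auto
    have b1: "\<bar>(ln (1 - S) + S) / 2\<bar> \<le> Tm^2" using a1 a2 by simp
    have b2: "\<bar>ln (rho \<alpha>)\<bar> \<le> 1 / real n" using rho(2) rhob by linarith
    have "\<bar>(ln (1 - S) + S) / 2 + ln (rho \<alpha>)\<bar> \<le> Tm^2 + 1 / real n"
      by (rule order_trans[OF abs_triangle_ineq]) (use b1 b2 in linarith)
    then show ?thesis unfolding E2_def using r01 by auto
  qed
  have sumsplit: "(\<Sum>i<k. ln (1 - T i)) = E1 - (\<Sum>i<k. T i) - (\<Sum>i<k. (T i)^2) / 2"
    unfolding E1_def by (simp add: sum.distrib sum_divide_distrib)
  have ST: "(\<Sum>i<k. T i) = (\<Sum>i<k. 2 * real i + real j + 1) / real n"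
    unfolding T_def by (simp add: sum_divide_distrib)
  have ST2: "(\<Sum>i<k. (T i)^2) = (\<Sum>i<k. (2 * real i + real j + 1)^2) / (real n)^2"
    unfolding T_def by (simp add: sum_divide_distrib power_divide)
  have eq: "ln ((\<Prod>i<k. 1 - T i) * H) = (E1 + E2) - (\<Sum>i<k. 2 * real i + real j + 1) / real n
      - (\<Sum>i<k. (2 * real i + real j + 1)^2) / (2 * (real n)^2) - r * (real p + real j - 1) / (2 * real n)"
  proof -
    have "ln ((\<Prod>i<k. 1 - T i) * H) = ln (\<Prod>i<k. 1 - T i) + ln H" using P Hpos by (simp add: ln_mult_pos)
    also have "\<dots> = E1 - (\<Sum>i<k. T i) - (\<Sum>i<k. (T i)^2) / 2 + r * (ln (1 - S) / 2 + ln (rho \<alpha>))"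
      unfolding lnP sumsplit lnH ..
    also have "\<dots> = (E1 + E2) - (\<Sum>i<k. T i) - (\<Sum>i<k. (T i)^2) / 2 - r * S / 2"
      unfolding E2_def by (simp add: algebra_simps)
    finally show ?thesis unfolding ST ST2 S_def by simp
  qed
  have X: "(\<Prod>i<k. 1 - T i) * H = (\<Prod>i<p div 2. 1 - (2 * real i + real j + 1) / real n) *
        (if p mod 2 = 1 then sqrt (1 - (real p + real j - 1) / real n) * rho ((real n - real p - real j + 1) / 2) else 1)"
    unfolding T_def H_def S_def \<alpha>_def k_def ..
  have pos: "(\<Prod>i<k. 1 - T i) * H > 0" using P Hpos by simp
  show ?thesis
  proof (intro exI conjI)
    show "\<bar>E1 + E2\<bar> \<le> real p * Tm^3 + (Tm^2 + 1 / real n)" using E1b E2b by linarith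
  qed (use eq pos X k_def in \<open>simp_all\<close>)
qed

lemma main_identity:
  fixes n p q :: nat
  assumes n: "n > 0" and small: "real p + real q + 1 \<le> real n / 2"
  defines "Tm \<equiv> (real p + real q + 1) / real n" and "r \<equiv> real (p mod 2)"
    and "K \<equiv> (2 / real n) powr (real p * real q / 2) *
     (\<Prod>j=1..q. Gamma ((real n - real j + 1) / 2) / Gamma ((real n - real p - real j + 1) / 2))"
  shows "\<exists>Err. \<bar>Err\<bar> \<le> real q * (real p * Tm^3 + (Tm^2 + 1 / real n)) \<and> K > 0 \<and>
     ln K = Err - (real p ^ 2 * real q + real p * real q ^ 2) / (4 * real n) - real q * (real p - r) / (4 * real n)
       - F2 (real (p div 2)) (real q) / (2 * (real n)^2)"
proof -
  define f where "f j = (\<Prod>i<p div 2. 1 - (2 * real i + real j + 1) / real n) *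
        (if p mod 2 = 1 then sqrt (1 - (real p + real j - 1) / real n) * rho ((real n - real p - real j + 1) / 2) else 1)" for j :: nat
  have pq: "p + q < n" using small by linarith
  have K: "K = (\<Prod>j=1..q. f j)" unfolding K_def f_def by (rule K_prod[OF n pq])
  have "\<forall>j\<in>{1..q}. \<exists>E. \<bar>E\<bar> \<le> real p * Tm^3 + (Tm^2 + 1 / real n) \<and> f j > 0 \<and>
    ln (f j) = E - (\<Sum>i<p div 2. 2 * real i + real j + 1) / real n - (\<Sum>i<p div 2. (2 * real i + real j + 1)^2) / (2 * (real n)^2)
        - r * (real p + real j - 1) / (2 * real n)"
    using factor_j[OF n small] unfolding f_def Tm_def r_def by blast
  then obtain E where E: "\<And>j. j \<in> {1..q} \<Longrightarrow> \<bar>E j\<bar> \<le> real p * Tm^3 + (Tm^2 + 1 / real n) \<and> f j > 0 \<and>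
    ln (f j) = E j - (\<Sum>i<p div 2. 2 * real i + real j + 1) / real n - (\<Sum>i<p div 2. (2 * real i + real j + 1)^2) / (2 * (real n)^2)
        - r * (real p + real j - 1) / (2 * real n)"
    by metis
  have Kpos: "K > 0" unfolding K using E by (intro prod_pos) auto
  define A where "A j = (\<Sum>i<p div 2. 2 * real i + real j + 1)" for j :: nat
  define B where "B j = (\<Sum>i<p div 2. (2 * real i + real j + 1)^2)" for j :: nat
  define g where "g j = real p + real j - 1" for j :: nat
  have "ln K = (\<Sum>j=1..q. ln (f j))" unfolding K by (rule ln_prod) (use E in force)+
  also have "\<dots> = (\<Sum>j=1..q. E j - A j / real n - B j / (2 * (real n)^2) - r * g j / (2 * real n))"
    using E unfolding A_def B_def g_def by (intro sum.cong) auto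
  also have "\<dots> = (\<Sum>j=1..q. E j) - (\<Sum>j=1..q. A j) / real n
      - (\<Sum>j=1..q. B j) / (2 * (real n)^2) - r * (\<Sum>j=1..q. g j) / (2 * real n)"
    by (simp only: sum_subtractf sum_divide_distrib sum_distrib_left)
  also have "\<dots> = (\<Sum>j=1..q. E j) - real (p div 2) * real q * (2 * real (p div 2) + real q + 1) / 2 / real n
      - F2 (real (p div 2)) (real q) / (2 * (real n)^2)
      - r * (real q * (2 * real p + real q - 1) / 2) / (2 * real n)"
    unfolding A_def B_def g_def sumT sumT2 sumS ..
  also have "real (p div 2) * real q * (2 * real (p div 2) + real q + 1) / 2 / real n
      + r * (real q * (2 * real p + real q - 1) / 2) / (2 * real n)
      = (real p ^ 2 * real q + real p * real q ^ 2) / (4 * real n) + real q * (real p - r) / (4 * real n)"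
  proof -
    have pk: "real p = 2 * real (p div 2) + r" unfolding r_def
      by (metis of_nat_add of_nat_mult of_nat_numeral div_mult_mod_eq mult.commute)
    have r01: "r = 0 \<or> r = 1" unfolding r_def by (cases "p mod 2 = 0") (auto simp: mod2_eq_if)
    then show ?thesis
    proof
      assume r: "r = 0"
      show ?thesis using n unfolding pk r by (simp add: field_simps power2_eq_square)
    next
      assume r: "r = 1"
      show ?thesis using n unfolding pk r by (simp add: field_simps power2_eq_square)
    qed
  qed
  ultimately have lnK: "ln K = (\<Sum>j=1..q. E j) - (real p ^ 2 * real q + real p * real q ^ 2) / (4 * real n) - real q * (real p - r) / (4 * real n)
       - F2 (real (p div 2)) (real q) / (2 * (real n)^2)" by (simp add: algebra_simps)
  have "\<bar>\<Sum>j=1..q. E j\<bar> \<le> (\<Sum>j=1..q. real p * Tm^3 + (Tm^2 + 1 / real n))"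
    by (rule order_trans[OF sum_abs sum_mono]) (use E in auto)
  also have "\<dots> = real q * (real p * Tm^3 + (Tm^2 + 1 / real n))" by simp
  finally show ?thesis using lnK Kpos by blast
qed

lemma pn_bounds:
  assumes "x > 0"
  shows "real (pn x n) \<le> x * sqrt (real n)" "x * sqrt (real n) - 1 < real (pn x n)"
proof -
  have nn: "x * sqrt (real n) \<ge> 0" using assms by simp
  then have fl: "\<lfloor>x * sqrt (real n)\<rfloor> \<ge> 0" by simp
  have eq: "real (pn x n) = real_of_int \<lfloor>x * sqrt (real n)\<rfloor>" unfolding pn_def using fl by simp
  show "real (pn x n) \<le> x * sqrt (real n)" unfolding eq by simp
  show "x * sqrt (real n) - 1 < real (pn x n)" unfolding eq by linarith
qed

lemma w_lim: "(\<lambda>n. 1 / sqrt (real n)) \<longlonglongrightarrow> 0"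
  by real_asymp

lemma pn_lim:
  assumes "x > 0"
  shows "(\<lambda>n. real (pn x n) / sqrt (real n)) \<longlonglongrightarrow> x"
proof -
  have "(\<lambda>n. real (pn x n) / sqrt (real n) - x) \<longlonglongrightarrow> 0"
  proof (rule Lim_null_comparison[OF _ w_lim])
    show "\<forall>\<^sub>F n in sequentially. norm (real (pn x n) / sqrt (real n) - x) \<le> 1 / sqrt (real n)"
      using eventually_gt_at_top[of 0]
    proof eventually_elim
      case (elim n)
      then have s: "sqrt (real n) > 0" by simp
      have "real (pn x n) / sqrt (real n) - x = (real (pn x n) - x * sqrt (real n)) / sqrt (real n)"
        using s by (simp add: field_simps)
      moreover have "\<bar>real (pn x n) - x * sqrt (real n)\<bar> \<le> 1" using pn_bounds[OF assms, of n] by linarith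
      ultimately show ?case using s by (simp add: abs_divide divide_right_mono)
    qed
  qed
  then show ?thesis by (simp add: LIM_zero_iff)
qed

lemma half_lim:
  assumes "x > 0"
  shows "(\<lambda>n. real (pn x n div 2) / sqrt (real n)) \<longlonglongrightarrow> x / 2"
proof -
  have "(\<lambda>n. real (pn x n div 2) / sqrt (real n) - real (pn x n) / sqrt (real n) / 2) \<longlonglongrightarrow> 0"
  proof (rule Lim_null_comparison[OF _ w_lim])
    show "\<forall>\<^sub>F n in sequentially. norm (real (pn x n div 2) / sqrt (real n) - real (pn x n) / sqrt (real n) / 2) \<le> 1 / sqrt (real n)"
      using eventually_gt_at_top[of 0]
    proof eventually_elim
      case (elim n)
      then have s: "sqrt (real n) > 0" by simp
      have "real (pn x n div 2) / sqrt (real n) - real (pn x n) / sqrt (real n) / 2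
          = (real (pn x n div 2) - real (pn x n) / 2) / sqrt (real n)"
        using s by (simp add: field_simps)
      moreover have "\<bar>real (pn x n div 2) - real (pn x n) / 2\<bar> \<le> 1"
      proof -
        have "real (pn x n) = 2 * real (pn x n div 2) + real (pn x n mod 2)"
          by (metis of_nat_add of_nat_mult of_nat_numeral div_mult_mod_eq mult.commute)
        moreover have "real (pn x n mod 2) \<le> 1" "real (pn x n mod 2) \<ge> 0" by auto
        ultimately show ?thesis unfolding abs_le_iff by linarith
      qed
      ultimately show ?case using s by (simp add: abs_divide divide_right_mono)
    qed
  qed
  moreover have "(\<lambda>n. real (pn x n) / sqrt (real n) / 2) \<longlonglongrightarrow> x / 2"
    using pn_lim[OF assms] by (intro tendsto_divide) auto
  ultimately have "(\<lambda>n. (real (pn x n div 2) / sqrt (real n) - real (pn x n) / sqrt (real n) / 2) + real (pn x n) / sqrt (real n) / 2) \<longlonglongrightarrow> 0 + x / 2"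
    by (rule tendsto_add)
  then show ?thesis by simp
qed

definition F2h :: "real \<Rightarrow> real \<Rightarrow> real \<Rightarrow> real" where
  "F2h u v w = 4 * v * (u - w) * u * (2 * u - w) / 6 + u * (u - w) * v * (v + 3 * w) + u * ((v + w) * (v + 2 * w) * (2 * v + 3 * w) / 6 - w^3)"

lemma F2_scale: "s > 0 \<Longrightarrow> F2 k q / (s^2)^2 = F2h (k / s) (q / s) (1 / s)"
  unfolding F2_def F2h_def by (simp add: field_simps power2_eq_square power3_eq_cube)

lemma B_scale: "(s::real) > 0 \<Longrightarrow> Q * (P * ((P + Q + 1) / s^2)^3 + (((P + Q + 1) / s^2)^2 + 1 / s^2))
   = (Q / s) * ((P / s) * (P / s + Q / s + 1 / s)^3 * (1 / s) + (P / s + Q / s + 1 / s)^2 * (1 / s) + 1 / s)"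
proof -
  assume s: "s > 0"
  have e1: "P / s + Q / s + 1 / s = (P + Q + 1) / s" by (simp add: add_divide_distrib)
  show ?thesis unfolding e1 using s by (simp add: power_divide divide_simps) algebra
qed

theorem lemma2p6:
  fixes x y :: real
  assumes "x > 0" and "y > 0"
  shows "\<exists>e :: nat \<Rightarrow> real. e \<longlonglongrightarrow> 0 \<and>
    (\<forall>\<^sub>F n in sequentially.
       Kn x y n = exp (- (((real (pn x n))^2 * real (pn y n) + real (pn x n) * (real (pn y n))^2) / (4 * real n)
                       + x * y / 4 + (2 * x^3 * y + 2 * x * y^3 + 3 * x^2 * y^2) / 24) + e n))"
proof -
  note x = assms(1) and y = assms(2)
  define P where "P n = real (pn x n)" for n
  define Q where "Q n = real (pn y n)" for n
  define R where "R n = real (pn x n mod 2)" for n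
  define Kd where "Kd n = real (pn x n div 2)" for n
  define a where "a n = P n / sqrt (real n)" for n
  define b where "b n = Q n / sqrt (real n)" for n
  define u where "u n = Kd n / sqrt (real n)" for n
  define w where "w n = 1 / sqrt (real n)" for n :: nat
  define Cub where "Cub = (2 * x^3 * y + 2 * x * y^3 + 3 * x^2 * y^2) / 24"
  define Aexp where "Aexp n = ((real (pn x n))^2 * real (pn y n) + real (pn x n) * (real (pn y n))^2) / (4 * real n)
                       + x * y / 4 + Cub" for n
  define e where "e n = ln (Kn x y n) + Aexp n" for n
  define D1 where "D1 n = x * y / 4 - Q n * (P n - R n) / (4 * real n)" for n
  define D2 where "D2 n = Cub - F2 (Kd n) (Q n) / (2 * (real n)^2)" for n
  define Tm where "Tm n = (P n + Q n + 1) / real n" for n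
  define Bd where "Bd n = Q n * (P n * (Tm n)^3 + ((Tm n)^2 + 1 / real n))" for n
  have la: "a \<longlonglongrightarrow> x" unfolding a_def P_def by (rule pn_lim[OF x])
  have lb: "b \<longlonglongrightarrow> y" unfolding b_def Q_def by (rule pn_lim[OF y])
  have lu: "u \<longlonglongrightarrow> x / 2" unfolding u_def Kd_def by (rule half_lim[OF x])
  have lw: "w \<longlonglongrightarrow> 0" unfolding w_def by (rule w_lim)
  have Tm_eq: "\<forall>\<^sub>F n in sequentially. Tm n = (a n + b n + w n) * w n"
    using eventually_gt_at_top[of 0]
  proof eventually_elim
    case (elim n)
    then have "sqrt (real n) > 0" "sqrt (real n) * sqrt (real n) = real n" by auto
    then show ?case unfolding Tm_def a_def b_def w_def by (simp add: field_simps)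
  qed
  have "(\<lambda>n. (a n + b n + w n) * w n) \<longlonglongrightarrow> (x + y + 0) * 0"
    by (intro tendsto_intros la lb lw)
  then have "Tm \<longlonglongrightarrow> 0" using Tm_eq by (simp add: tendsto_cong)
  then have "\<forall>\<^sub>F n in sequentially. Tm n < 1/2" by (rule order_tendstoD) simp
  then have small: "\<forall>\<^sub>F n in sequentially. n > 0 \<and> P n + Q n + 1 \<le> real n / 2"
    using eventually_gt_at_top[of 0]
  proof eventually_elim
    case (elim n)
    then show ?case unfolding Tm_def by (simp add: field_simps)
  qed
  have main: "\<forall>\<^sub>F n in sequentially. Kn x y n > 0 \<and> \<bar>e n - D1 n - D2 n\<bar> \<le> Bd n"
    using small
  proof eventually_elim
    case (elim n)
    then have n: "n > 0" and sm: "real (pn x n) + real (pn y n) + 1 \<le> real n / 2" unfolding P_def Q_def by auto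
    obtain Err where Err: "\<bar>Err\<bar> \<le> real (pn y n) * (real (pn x n) * ((real (pn x n) + real (pn y n) + 1) / real n)^3
        + (((real (pn x n) + real (pn y n) + 1) / real n)^2 + 1 / real n))"
      and Kp: "Kn x y n > 0"
      and lnK: "ln (Kn x y n) = Err - (real (pn x n) ^ 2 * real (pn y n) + real (pn x n) * real (pn y n) ^ 2) / (4 * real n)
         - real (pn y n) * (real (pn x n) - real (pn x n mod 2)) / (4 * real n)
         - F2 (real (pn x n div 2)) (real (pn y n)) / (2 * (real n)^2)"
      using main_identity[OF n sm] unfolding Kn_def Let_def by blast
    have "e n - D1 n - D2 n = Err"
      unfolding e_def D1_def D2_def Aexp_def lnK P_def Q_def R_def Kd_def by (simp add: algebra_simps)
    then show ?case using Err Kp unfolding Bd_def Tm_def P_def Q_def by simp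
  qed
  have lBd: "Bd \<longlonglongrightarrow> 0"
  proof -
    have ev: "\<forall>\<^sub>F n in sequentially. Bd n = b n * (a n * (a n + b n + w n)^3 * w n + (a n + b n + w n)^2 * w n + w n)"
      using eventually_gt_at_top[of 0]
    proof eventually_elim
      case (elim n)
      then have s: "sqrt (real n) > 0" and s2: "(sqrt (real n))^2 = real n" by auto
      show ?case unfolding Bd_def Tm_def a_def b_def w_def
        using B_scale[OF s, of "Q n" "P n"] unfolding s2 .
    qed
    have "(\<lambda>n. b n * (a n * (a n + b n + w n)^3 * w n + (a n + b n + w n)^2 * w n + w n)) \<longlonglongrightarrow>
        y * (x * (x + y + 0)^3 * 0 + (x + y + 0)^2 * 0 + 0)"
      by (intro tendsto_intros la lb lw)
    then show ?thesis using ev by (simp add: tendsto_cong)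
  qed
  have lD1: "D1 \<longlonglongrightarrow> 0"
  proof -
    have ev: "\<forall>\<^sub>F n in sequentially. D1 n = x * y / 4 - (b n * a n - R n * (b n * w n)) / 4"
      using eventually_gt_at_top[of 0]
    proof eventually_elim
      case (elim n)
      then have "sqrt (real n) > 0" "sqrt (real n) * sqrt (real n) = real n" by auto
      then show ?case unfolding D1_def a_def b_def w_def by (simp add: field_simps)
    qed
    have bw: "(\<lambda>n. b n * w n) \<longlonglongrightarrow> y * 0" by (intro tendsto_intros lb lw)
    have "(\<lambda>n. R n * (b n * w n)) \<longlonglongrightarrow> 0"
    proof (rule Lim_null_comparison)
      show "\<forall>\<^sub>F n in sequentially. norm (R n * (b n * w n)) \<le> b n * w n"
      proof (rule always_eventually, rule allI)
        fix n
        have "R n \<le> 1" "R n \<ge> 0" unfolding R_def by auto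
        moreover have "b n * w n \<ge> 0" unfolding b_def w_def Q_def by simp
        ultimately show "norm (R n * (b n * w n)) \<le> b n * w n"
          by (metis abs_of_nonneg mult_left_le_one_le mult_nonneg_nonneg real_norm_def)
      qed
    qed (use bw in simp)
    then have "(\<lambda>n. x * y / 4 - (b n * a n - R n * (b n * w n)) / 4) \<longlonglongrightarrow> x * y / 4 - (y * x - 0) / 4"
      by (intro tendsto_intros la lb) simp_all
    then show ?thesis using ev by (simp add: tendsto_cong)
  qed
  have lD2: "D2 \<longlonglongrightarrow> 0"
  proof -
    have ev: "\<forall>\<^sub>F n in sequentially. D2 n = Cub - F2h (u n) (b n) (w n) / 2"
      using eventually_gt_at_top[of 0]
    proof eventually_elim
      case (elim n)
      then have s: "sqrt (real n) > 0" and s2: "(sqrt (real n))^2 = real n" by auto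
      have "F2 (Kd n) (Q n) / (real n)^2 = F2h (u n) (b n) (w n)"
        using F2_scale[OF s, of "Kd n" "Q n"] unfolding s2 u_def b_def w_def .
      then show ?case unfolding D2_def by (simp add: field_simps)
    qed
    have "(\<lambda>n. Cub - F2h (u n) (b n) (w n) / 2) \<longlonglongrightarrow> Cub - F2h (x/2) y 0 / 2"
      unfolding F2h_def by (intro tendsto_intros lu lb lw) simp_all
    moreover have "Cub - F2h (x/2) y 0 / 2 = 0" unfolding Cub_def F2h_def
      by (simp add: field_simps power2_eq_square power3_eq_cube)
    ultimately show ?thesis using ev by (simp add: tendsto_cong)
  qed
  have lErr: "(\<lambda>n. e n - D1 n - D2 n) \<longlonglongrightarrow> 0"
    by (rule Lim_null_comparison[OF _ lBd]) (use main in \<open>auto elim: eventually_mono\<close>)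
  have "(\<lambda>n. (e n - D1 n - D2 n) + D1 n + D2 n) \<longlonglongrightarrow> 0 + 0 + 0"
    by (intro tendsto_add lErr lD1 lD2)
  then have le: "e \<longlonglongrightarrow> 0" by simp
  show ?thesis
  proof (intro exI conjI)
    show "e \<longlonglongrightarrow> 0" by (rule le)
    show "\<forall>\<^sub>F n in sequentially.
       Kn x y n = exp (- (((real (pn x n))^2 * real (pn y n) + real (pn x n) * (real (pn y n))^2) / (4 * real n)
                       + x * y / 4 + (2 * x^3 * y + 2 * x * y^3 + 3 * x^2 * y^2) / 24) + e n)"
      using main
    proof eventually_elim
      case (elim n)
      have "- (((real (pn x n))^2 * real (pn y n) + real (pn x n) * (real (pn y n))^2) / (4 * real n)
                       + x * y / 4 + (2 * x^3 * y + 2 * x * y^3 + 3 * x^2 * y^2) / 24) + e n = ln (Kn x y n)"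
        unfolding e_def Aexp_def Cub_def by simp
      then show ?case using elim by simp
    qed
  qed
qed

end
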